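(* The online correlated rental algorithm described in the context (Algorithm 1) is a $\frac{1}{32}$-OCR algorithm. That is, for every integer $d\ge1$, every fixed sequence of proposals $Q_1,\dots,Q_n$, every round $j$ and every offline vertex $i$, with $j'=\mathrm{prev}^i_j$, $$\Delta\mu^i_j \ge \begin{cases} 0 & i\notin Q_j,\\ p^i_j & i\in Q_j,\ |Q_j|=1,\\ p^i_j/2 & i\in Q_j,\ |Q_j|=2,\ j'\le j-d,\\ p^i_j/2+\frac{1}{32}\,(p^i_{j'}-\Delta\mu^i_{j'}) & i\in Q_j,\ |Q_j|=2,\ j'>j-d.\end{cases}$$ In particular, a $\frac{1}{32}$-OCR online algorithm exists.
   Context: Online correlated rental setting: there is a finite set $V$ of offline vertices and an integer $d\ge1$. A sequence $Q_1,\dots,Q_n$ of subsets of $V$, each of size $1$ or $2$, is fixed in advance and revealed online; at round $j$ the algorithm receives $Q_j$ and must select one vertex of $Q_j$. Round $j$ is deterministic if $|Q_j|=1$ and randomized if $|Q_j|=2$. An offline vertex $i$ is matched at round $j$ if it is selected at round $j$ and it was not matched at any round $t$ with $j-d<t<j$ (matching is built greedily in increasing time). Define $\Delta\mu^i_j=\Pr[i \text{ is matched at round } j]$ and $p^i_j=1-\sum_{t=\max\{1,j-d+1\}}^{j-1}\Delta\mu^i_t$ (the probability that $i$ is available at round $j$). $\mathrm{prev}^i_j$ is the largest $j'<j$ with $i\in Q_{j'}$, and $-\infty$ if none exists. An algorithm is $\gamma$-OCR ($0\le\gamma\le1$) if the displayed inequalities hold with $\frac1{32}$ replaced by $\gamma$.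 Algorithm 1: it keeps a state $\tau_{i,t}\in\{\mathrm{sel},\mathrm{nsel},\mathrm{unk}\}$ for every $i\in V$ and every round $t$, initially all $\mathrm{unk}$. All random draws are fresh and independent. "Reset $i$" at round $j$ means setting $\tau_{i,t}=\mathrm{unk}$ for all $t\in[j+1,j+d-1]$. (1) If $Q_j=\{i_1\}$: reset $i_1$ and select $i_1$. (2) If $Q_j=\{i_1,i_2\}$: with probability $1/2$ the round is a sender, and otherwise it is a receiver. - Sender: draw $\ell,m\in\{1,2\}$ independently and uniformly. Reset $i_{3-m}$. Set $\tau_{i_m,t}=\mathrm{sel}$ for all $t\in[j+1,j+d-1]$ if $\ell=m$, and $\tau_{i_m,t}=\mathrm{nsel}$ for those $t$ otherwise. Select $i_\ell$. - Receiver: draw $m\in\{1,2\}$ uniformly. If $\tau_{i_m,j}=\mathrm{sel}$, let $\ell=3-m$; if $\tau_{i_m,j}=\mathrm{nsel}$, let $\ell=m$; otherwise draw $\ell\in\{1,2\}$ uniformly. Reset $i_1$ and $i_2$. Select $i_\ell$. *)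

theory Defs
  imports "HOL-Probability.Probability"
begin

text \<open>Rounds are numbered 1..n; round j's proposal is Q ! (j-1).
  The state of Algorithm 1 is the tau table together with the list of
  vertices selected so far (selection at round j is entry j-1).\<close>

datatype tstate = Sel | NSel | Unk

type_synonym 'v ocr_state = "('v \<Rightarrow> nat \<Rightarrow> tstate) \<times> 'v list"

definition set_tau :: "nat \<Rightarrow> 'v \<Rightarrow> nat \<Rightarrow> tstate \<Rightarrow> ('v \<Rightarrow> nat \<Rightarrow> tstate) \<Rightarrow> ('v \<Rightarrow> nat \<Rightarrow> tstate)" where
  "set_tau d i j x tau = tau(i := (\<lambda>t. if j + 1 \<le> t \<and> t + 1 \<le> j + d then x else tau i t))"

definition reset :: "nat \<Rightarrow> 'v \<Rightarrow> nat \<Rightarrow> ('v \<Rightarrow> nat \<Rightarrow> tstate) \<Rightarrow> ('v \<Rightarrow> nat \<Rightarrow> tstate)" where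
  "reset d i j tau = set_tau d i j Unk tau"

text \<open>A fixed (arbitrary) labelling i1, i2 of a proposal set.\<close>
definition fst_el :: "'v set \<Rightarrow> 'v" where "fst_el Q = (SOME x. x \<in> Q)"
definition snd_el :: "'v set \<Rightarrow> 'v" where "snd_el Q = (SOME y. y \<in> Q - {fst_el Q})"

text \<open>One round j of Algorithm 1 (coin = True encodes index 1, False index 2).\<close>
definition alg_step :: "nat \<Rightarrow> 'v set \<Rightarrow> nat \<Rightarrow> 'v ocr_state \<Rightarrow> 'v ocr_state pmf" where
  "alg_step d Q j st =
    (let tau = fst st; sels = snd st; i1 = fst_el Q; i2 = snd_el Q;
         pick = (\<lambda>b. if b then i1 else i2) in
     if card Q = 1 then return_pmf (reset d i1 j tau, sels @ [i1])
     else do {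
       sender \<leftarrow> bernoulli_pmf (1/2);
       if sender then do {
         l \<leftarrow> bernoulli_pmf (1/2);
         m \<leftarrow> bernoulli_pmf (1/2);
         let tau' = set_tau d (pick m) j (if l = m then Sel else NSel) (reset d (pick (\<not> m)) j tau);
         return_pmf (tau', sels @ [pick l])
       } else do {
         m \<leftarrow> bernoulli_pmf (1/2);
         l \<leftarrow> (case tau (pick m) j of
                  Sel \<Rightarrow> return_pmf (\<not> m)
                | NSel \<Rightarrow> return_pmf m
                | Unk \<Rightarrow> bernoulli_pmf (1/2));
         return_pmf (reset d i2 j (reset d i1 j tau), sels @ [pick l])
       }
     })"

fun alg_run :: "nat \<Rightarrow> 'v set list \<Rightarrow> nat \<Rightarrow> 'v ocr_state pmf" where
  "alg_run d Q 0 = return_pmf (\<lambda>_ _. Unk, [])"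
| "alg_run d Q (Suc k) = alg_run d Q k \<bind> alg_step d (Q ! k) (Suc k)"

text \<open>Rounds (up to j) at which i is matched, given the selection list s
  (greedy in increasing time).\<close>
fun matched_rounds :: "nat \<Rightarrow> 'v list \<Rightarrow> 'v \<Rightarrow> nat \<Rightarrow> nat set" where
  "matched_rounds d s i 0 = {}"
| "matched_rounds d s i (Suc j) = matched_rounds d s i j \<union>
     (if Suc j \<le> length s \<and> s ! j = i \<and>
         (\<forall>t\<in>matched_rounds d s i j. \<not> (Suc j - d < t))
      then {Suc j} else {})"

definition matched :: "nat \<Rightarrow> 'v list \<Rightarrow> 'v \<Rightarrow> nat \<Rightarrow> bool" where
  "matched d s i j \<longleftrightarrow> j \<in> matched_rounds d s i j"

definition dmu :: "nat \<Rightarrow> 'v set list \<Rightarrow> 'v \<Rightarrow> nat \<Rightarrow> real" where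
  "dmu d Q i j = measure_pmf.prob (alg_run d Q (length Q)) {st. matched d (snd st) i j}"

definition avail :: "nat \<Rightarrow> 'v set list \<Rightarrow> 'v \<Rightarrow> nat \<Rightarrow> real" where
  "avail d Q i j = 1 - (\<Sum>t\<in>{max 1 (j + 1 - d)..<j}. dmu d Q i t)"

text \<open>prev^i_j: largest j' < j (j' \<ge> 1) with i \<in> Q_j'; None encodes -\<infinity>.\<close>
definition prev :: "'v set list \<Rightarrow> 'v \<Rightarrow> nat \<Rightarrow> nat option" where
  "prev Q i j = (if \<exists>j'. 1 \<le> j' \<and> j' < j \<and> i \<in> Q ! (j' - 1)
                 then Some (GREATEST j'. 1 \<le> j' \<and> j' < j \<and> i \<in> Q ! (j' - 1)) else None)"

end

theory Submission
  imports Defs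
begin


type_synonym coin = "bool \<times> bool \<times> bool"

definition pick :: "'v set \<Rightarrow> bool \<Rightarrow> 'v" where
  "pick Q b = (if b then fst_el Q else snd_el Q)"

definition tau_of :: "nat \<Rightarrow> 'v set \<Rightarrow> nat \<Rightarrow> ('v \<Rightarrow> nat \<Rightarrow> tstate) \<Rightarrow> coin \<Rightarrow> ('v \<Rightarrow> nat \<Rightarrow> tstate)" where
  "tau_of d Q j tau c = (case c of (b1,b2,b3) \<Rightarrow>
     if card Q = 1 then reset d (fst_el Q) j tau
     else if b1 then set_tau d (pick Q b3) j (if b2 = b3 then Sel else NSel) (reset d (pick Q (\<not> b3)) j tau)
     else reset d (snd_el Q) j (reset d (fst_el Q) j tau))"

definition sel_of :: "nat \<Rightarrow> 'v set \<Rightarrow> nat \<Rightarrow> ('v \<Rightarrow> nat \<Rightarrow> tstate) \<Rightarrow> coin \<Rightarrow> 'v" where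
  "sel_of d Q j tau c = (case c of (b1,b2,b3) \<Rightarrow>
     if card Q = 1 then fst_el Q
     else if b1 then pick Q b2
     else pick Q (case tau (pick Q b2) j of Sel \<Rightarrow> \<not> b2 | NSel \<Rightarrow> b2 | Unk \<Rightarrow> b3))"

definition det_step :: "nat \<Rightarrow> 'v set \<Rightarrow> nat \<Rightarrow> 'v ocr_state \<Rightarrow> coin \<Rightarrow> 'v ocr_state" where
  "det_step d Q j st c = (tau_of d Q j (fst st) c, snd st @ [sel_of d Q j (fst st) c])"

lemma coin_uniform: "pmf_of_set (UNIV :: coin set) =
   pair_pmf (bernoulli_pmf (1/2)) (pair_pmf (bernoulli_pmf (1/2)) (bernoulli_pmf (1/2)))"
  by (rule pmf_eqI) (auto simp: pmf_pair card_UNIV_bool)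

lemma step_eq: "alg_step d Q j st = map_pmf (det_step d Q j st) (pmf_of_set UNIV)"
proof (cases "card Q = 1")
  case True
  then have "det_step d Q j st = (\<lambda>_. (reset d (fst_el Q) j (fst st), snd st @ [fst_el Q]))"
    by (auto simp: det_step_def tau_of_def sel_of_def split_beta)
  then show ?thesis using True
    by (simp add: alg_step_def Let_def map_pmf_const)
next
  case False
  let ?B = "bernoulli_pmf (1/2)"
  have "map_pmf (det_step d Q j st) (pmf_of_set UNIV) =
     ?B \<bind> (\<lambda>b1. ?B \<bind> (\<lambda>b2. ?B \<bind> (\<lambda>b3. return_pmf (det_step d Q j st (b1,b2,b3)))))"
    unfolding coin_uniform pair_pmf_def map_bind_pmf map_return_pmf bind_assoc_pmf bind_return_pmf
    by simp
  also have "\<dots> = alg_step d Q j st"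
    unfolding alg_step_def Let_def using False
    apply simp
    apply (rule bind_pmf_cong, simp)
    subgoal for b1
      apply (cases b1)
       apply (simp add: det_step_def tau_of_def sel_of_def pick_def)
      apply (simp add: det_step_def tau_of_def sel_of_def pick_def)
      apply (rule bind_pmf_cong, simp)
      subgoal for m
        by (cases "fst st (if m then fst_el Q else snd_el Q) j") (simp_all add: bind_return_pmf)
      done
    done
  finally show ?thesis by simp
qed

fun TAU :: "nat \<Rightarrow> 'v set list \<Rightarrow> coin list \<Rightarrow> nat \<Rightarrow> ('v \<Rightarrow> nat \<Rightarrow> tstate)" where
  "TAU d Q cs 0 = (\<lambda>_ _. Unk)"
| "TAU d Q cs (Suc k) = tau_of d (Q!k) (Suc k) (TAU d Q cs k) (cs!k)"

definition SEL :: "nat \<Rightarrow> 'v set list \<Rightarrow> coin list \<Rightarrow> nat \<Rightarrow> 'v" where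
  "SEL d Q cs u = sel_of d (Q!u) (Suc u) (TAU d Q cs u) (cs!u)"

definition Lc :: "nat \<Rightarrow> coin list set" where "Lc n = {cs. length cs = n}"

lemma TAU_cong: "(\<And>u. u < k \<Longrightarrow> cs!u = cs'!u) \<Longrightarrow> TAU d Q cs k = TAU d Q cs' k"
  by (induction k) auto

lemma SEL_cong: "(\<And>u. u \<le> k \<Longrightarrow> cs!u = cs'!u) \<Longrightarrow> SEL d Q cs k = SEL d Q cs' k"
  unfolding SEL_def by (metis TAU_cong less_imp_le order_refl)

lemma Lc_alt: "Lc n = {xs. set xs \<subseteq> UNIV \<and> length xs = n}" by (simp add: Lc_def)

lemma finite_Lc[simp]: "finite (Lc n)"
  unfolding Lc_alt by (rule finite_lists_length_eq) simp

lemma card_Lc: "card (Lc n) = 8 ^ n"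
  unfolding Lc_alt by (subst card_lists_length_eq) (simp_all add: card_UNIV_bool)

lemma Lc_ne[simp]: "Lc n \<noteq> {}"
  unfolding Lc_def by (metis (mono_tags) empty_Collect_eq length_replicate)

lemma pair_pmf_of_set':
  assumes "finite A" "A \<noteq> {}" "finite B" "B \<noteq> {}"
  shows "pair_pmf (pmf_of_set A) (pmf_of_set B) = pmf_of_set (A \<times> B)"
proof (rule pmf_eqI)
  fix x :: "'a \<times> 'b"
  show "pmf (pair_pmf (pmf_of_set A) (pmf_of_set B)) x = pmf (pmf_of_set (A \<times> B)) x"
    using assms by (cases x) (simp add: pmf_pair card_cartesian_product indicator_def)
qed

lemma U_Suc: "pmf_of_set (Lc (Suc n)) =
   map_pmf (\<lambda>(cs,c). cs @ [c]) (pair_pmf (pmf_of_set (Lc n)) (pmf_of_set (UNIV::coin set)))"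
proof -
  have "map_pmf (\<lambda>(cs,c). cs @ [c]) (pmf_of_set (Lc n \<times> (UNIV::coin set))) =
        pmf_of_set ((\<lambda>(cs,c). cs @ [c]) ` (Lc n \<times> UNIV))"
    by (rule map_pmf_of_set_inj) (auto simp: inj_on_def)
  moreover have "(\<lambda>(cs,c). cs @ [c]) ` (Lc n \<times> (UNIV::coin set)) = Lc (Suc n)"
  proof (intro equalityI subsetI)
    fix xs assume "xs \<in> Lc (Suc n)"
    then have "xs = butlast xs @ [last xs]" "butlast xs \<in> Lc n"
      by (auto simp: Lc_def) (metis append_butlast_last_id list.size(3) nat.distinct(1))
    then show "xs \<in> (\<lambda>(cs,c). cs @ [c]) ` (Lc n \<times> UNIV)" by (metis (no_types, lifting) UNIV_I mem_Sigma_iff pair_imageI)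
  qed (auto simp: Lc_def)
  ultimately show ?thesis by (simp add: pair_pmf_of_set')
qed

lemma run_eq: "alg_run d Q k = map_pmf (\<lambda>cs. (TAU d Q cs k, map (SEL d Q cs) [0..<k])) (pmf_of_set (Lc k))"
proof (induction k)
  case 0
  then show ?case by (simp add: Lc_def pmf_of_set_singleton)
next
  case (Suc k)
  have "alg_run d Q (Suc k) = pmf_of_set (Lc k) \<bind>
      (\<lambda>cs. map_pmf (det_step d (Q!k) (Suc k) (TAU d Q cs k, map (SEL d Q cs) [0..<k])) (pmf_of_set UNIV))"
    by (simp add: Suc step_eq bind_map_pmf)
  also have "\<dots> = pmf_of_set (Lc k) \<bind>
      (\<lambda>cs. map_pmf (\<lambda>c. (TAU d Q (cs@[c]) (Suc k), map (SEL d Q (cs@[c])) [0..<Suc k])) (pmf_of_set UNIV))"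
  proof (rule bind_pmf_cong[OF refl], rule map_pmf_cong[OF refl])
    fix cs c assume "cs \<in> set_pmf (pmf_of_set (Lc k))"
    then have "cs \<in> Lc k" by simp
    then have len: "length cs = k" by (simp add: Lc_def)
    have T: "TAU d Q (cs@[c]) k = TAU d Q cs k" and ck: "(cs@[c])!k = c"
      by (rule TAU_cong, simp add: len nth_append, simp add: len[symmetric])
    have S: "SEL d Q (cs@[c]) u = SEL d Q cs u" if "u < k" for u
      by (rule SEL_cong) (use that in \<open>simp add: len nth_append\<close>)
    have S2: "SEL d Q (cs@[c]) k = sel_of d (Q!k) (Suc k) (TAU d Q cs k) c"
      by (simp add: SEL_def T ck)
    show "det_step d (Q!k) (Suc k) (TAU d Q cs k, map (SEL d Q cs) [0..<k]) c =
          (TAU d Q (cs@[c]) (Suc k), map (SEL d Q (cs@[c])) [0..<Suc k])"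
      by (simp add: det_step_def T S S2 len ck)
  qed
  also have "\<dots> = map_pmf (\<lambda>cs. (TAU d Q cs (Suc k), map (SEL d Q cs) [0..<Suc k])) (pmf_of_set (Lc (Suc k)))"
    unfolding U_Suc pair_pmf_def map_bind_pmf map_return_pmf bind_assoc_pmf bind_return_pmf
    by (simp add: map_pmf_def)
  finally show ?case .
qed

definition ind :: "bool \<Rightarrow> real" where "ind P = (if P then 1 else 0)"

definition sls :: "nat \<Rightarrow> 'v set list \<Rightarrow> coin list \<Rightarrow> 'v list" where
  "sls d Q cs = map (SEL d Q cs) [0..<length Q]"

lemma dmu_sum: "dmu d Q i j = (\<Sum>cs\<in>Lc (length Q). ind (matched d (sls d Q cs) i j)) / 8 ^ length Q"
proof -
  have "dmu d Q i j = real (card (Lc (length Q) \<inter> {cs. matched d (sls d Q cs) i j})) / 8 ^ length Q"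
    by (simp add: dmu_def run_eq measure_pmf_of_set card_Lc sls_def vimage_def)
  also have "real (card (Lc (length Q) \<inter> {cs. matched d (sls d Q cs) i j})) =
      (\<Sum>cs\<in>Lc (length Q). ind (matched d (sls d Q cs) i j))"
    by (simp add: ind_def sum.If_cases Int_def)
  finally show ?thesis .
qed


lemma fst_el_in: "Q \<noteq> {} \<Longrightarrow> fst_el Q \<in> Q"
  unfolding fst_el_def by (rule someI_ex) auto
lemma card1_eq: "card Q = 1 \<Longrightarrow> Q = {fst_el Q}"
proof -
  assume "card Q = 1"
  then obtain x where "Q = {x}" by (rule card_1_singletonE)
  then show ?thesis using fst_el_in[of Q] by auto
qed
lemma card2_facts:
  assumes "card Q = 2"
  shows "fst_el Q \<in> Q" "snd_el Q \<in> Q" "fst_el Q \<noteq> snd_el Q" "\<And>v. v \<in> Q \<Longrightarrow> v = fst_el Q \<or> v = snd_el Q"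
proof -
  have fin: "finite Q" using assms card.infinite by force
  have ne: "Q \<noteq> {}" using assms by force
  show f: "fst_el Q \<in> Q" using fst_el_in[OF ne] .
  have "card (Q - {fst_el Q}) = 1" using assms f fin by (simp add: card_Diff_singleton)
  then have "Q - {fst_el Q} \<noteq> {}" by force
  then have "snd_el Q \<in> Q - {fst_el Q}" unfolding snd_el_def by (intro someI_ex[of "\<lambda>y. y \<in> Q - {fst_el Q}"]) blast
  then show s: "snd_el Q \<in> Q" and n: "fst_el Q \<noteq> snd_el Q" by auto
  show "v = fst_el Q \<or> v = snd_el Q" if v: "v \<in> Q" for v
  proof (rule ccontr)
    assume "\<not> (v = fst_el Q \<or> v = snd_el Q)"
    then have "card {v, fst_el Q, snd_el Q} = 3" using n by simp
    moreover have "card {v, fst_el Q, snd_el Q} \<le> card Q" using f s v fin by (intro card_mono) auto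
    ultimately show False using assms by simp
  qed
qed

lemma pick_in: "card Q = 2 \<Longrightarrow> pick Q b \<in> Q"
  using card2_facts(1,2) by (auto simp: pick_def)

lemma pick_inj: assumes "card Q = 2" shows "pick Q b = pick Q b' \<longleftrightarrow> b = b'"
proof -
  have "fst_el Q \<noteq> snd_el Q" by (rule card2_facts(3)[OF assms])
  then show ?thesis by (cases b; cases b') (auto simp: pick_def)
qed

lemma pick_cases: "card Q = 2 \<Longrightarrow> v \<in> Q \<Longrightarrow> \<exists>b. v = pick Q b"
  using card2_facts(4) unfolding pick_def by (metis (full_types))

lemma tau_of_other:
  assumes "card Q = 1 \<or> card Q = 2" "v \<notin> Q"
  shows "tau_of d Q j tau c v = tau v"
proof -
  have "v \<noteq> fst_el Q" using assms card1_eq card2_facts(1) by (metis insertI1)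
  moreover have "card Q = 2 \<Longrightarrow> v \<noteq> snd_el Q" using assms card2_facts(2) by metis
  moreover have "card Q = 2 \<Longrightarrow> v \<noteq> pick Q b" for b using assms pick_in by metis
  ultimately show ?thesis using assms(1)
    by (cases c) (auto simp: tau_of_def set_tau_def reset_def)
qed

lemma tau_of_local: "tau v = tau' v \<Longrightarrow> tau_of d Q j tau c v = tau_of d Q j tau' c v"
  by (cases c) (auto simp: tau_of_def set_tau_def reset_def)

lemma tau_of_outside: "\<not> (j + 1 \<le> t \<and> t + 1 \<le> j + d) \<Longrightarrow> tau_of d Q j tau c v t = tau v t"
  by (cases c) (auto simp: tau_of_def set_tau_def reset_def)

definition markval :: "'v set \<Rightarrow> coin \<Rightarrow> 'v \<Rightarrow> tstate" where
  "markval Q c v = (case c of (b1,b2,b3) \<Rightarrow>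
     if card Q = 2 \<and> b1 \<and> pick Q b3 = v then (if b2 = b3 then Sel else NSel) else Unk)"

lemma tau_of_in:
  assumes "card Q = 1 \<or> card Q = 2" "v \<in> Q" "j + 1 \<le> t" "t + 1 \<le> j + d"
  shows "tau_of d Q j tau c v t = markval Q c v"
proof (cases "card Q = 1")
  case True
  then have "v = fst_el Q" using assms card1_eq by blast
  then show ?thesis using True assms by (cases c) (auto simp: tau_of_def set_tau_def reset_def markval_def)
next
  case False
  then have c2: "card Q = 2" using assms by auto
  obtain b1 b2 b3 where c: "c = (b1,b2,b3)" by (cases c)
  obtain b where v: "v = pick Q b" using pick_cases[OF c2 assms(2)] by blast
  have sn: "snd_el Q = pick Q False" "fst_el Q = pick Q True" by (auto simp: pick_def)
  have ne: "pick Q True \<noteq> pick Q False" using pick_inj[OF c2] by blast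
  show ?thesis
  proof (cases b1)
    case True
    then show ?thesis using assms(3,4) c2 ne
      unfolding c v tau_of_def markval_def set_tau_def reset_def
      by (cases b; cases b3) auto
  next
    case False
    then show ?thesis using assms(3,4) c2 ne
      unfolding c v tau_of_def markval_def set_tau_def reset_def sn
      by (cases b) auto
  qed
qed

lemma sel_of_local: "(\<And>v. v \<in> Q \<Longrightarrow> tau v = tau' v) \<Longrightarrow> card Q = 1 \<or> card Q = 2 \<Longrightarrow>
   sel_of d Q j tau c = sel_of d Q j tau' c"
proof -
  assume a: "\<And>v. v \<in> Q \<Longrightarrow> tau v = tau' v" "card Q = 1 \<or> card Q = 2"
  obtain b1 b2 b3 where c: "c = (b1,b2,b3)" by (cases c)
  have "card Q = 2 \<Longrightarrow> tau (pick Q b2) = tau' (pick Q b2)" using a(1) pick_in by blast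
  then show ?thesis using a(2) by (auto simp: sel_of_def c)
qed

lemma sel_of_in: "card Q = 1 \<or> card Q = 2 \<Longrightarrow> sel_of d Q j tau c \<in> Q"
  using pick_in card1_eq by (cases c) (auto simp: sel_of_def)



lemma MR_range: "t \<in> matched_rounds d s i j \<Longrightarrow> 1 \<le> t \<and> t \<le> j"
  by (induction j) (auto split: if_splits)

lemma matched_0[simp]: "\<not> matched d s i 0"
  by (simp add: matched_def)

lemma matched_Suc0: "matched d s i (Suc j) \<longleftrightarrow> Suc j \<le> length s \<and> s!j = i \<and>
    (\<forall>t\<in>matched_rounds d s i j. \<not> (Suc j - d < t))"
  using MR_range[of "Suc j" d s i j] by (auto simp: matched_def)

lemma MR_iff: "t \<in> matched_rounds d s i j \<longleftrightarrow> t \<le> j \<and> matched d s i t"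
proof (induction j)
  case 0
  then show ?case using MR_range[of t d s i 0] by (auto simp: matched_def)
next
  case (Suc j)
  show ?case
  proof (cases "t = Suc j")
    case True
    then show ?thesis using MR_range[of "Suc j" d s i j] by (auto simp: matched_def)
  next
    case False
    then have "t \<in> matched_rounds d s i (Suc j) \<longleftrightarrow> t \<in> matched_rounds d s i j" by auto
    then show ?thesis using Suc False by auto
  qed
qed

lemma matched_Suc: "matched d s i (Suc j) \<longleftrightarrow> j < length s \<and> s!j = i \<and>
    (\<forall>t. 1 \<le> t \<and> t \<le> j \<and> Suc j < t + d \<longrightarrow> \<not> matched d s i t)"
proof -
  have e: "(Suc j - d < t) \<longleftrightarrow> Suc j < t + d" if "1 \<le> t" for t using that by arith
  show ?thesis unfolding matched_Suc0 using MR_iff[of _ d s i j] MR_range[of _ d s i j] e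
    by (auto simp: Suc_le_eq)
qed

definition Av :: "nat \<Rightarrow> 'v list \<Rightarrow> 'v \<Rightarrow> nat \<Rightarrow> bool" where
  "Av d s i j \<longleftrightarrow> (\<forall>t. 1 \<le> t \<and> t < j \<and> j < t + d \<longrightarrow> \<not> matched d s i t)"

lemma matched_Av: "matched d s i j \<longleftrightarrow> 1 \<le> j \<and> j \<le> length s \<and> s!(j-1) = i \<and> Av d s i j"
proof (cases j)
  case 0 then show ?thesis by simp
next
  case (Suc j')
  then show ?thesis using matched_Suc[of d s i j'] unfolding Av_def by (auto simp: less_Suc_eq_le Suc_le_eq)
qed

lemma matched_cong:
  assumes "length s = length s'" "\<And>u. u < J \<Longrightarrow> (s!u = i) = (s'!u = i)" "t \<le> J"
  shows "matched d s i t = matched d s' i t"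
  using assms(3)
proof (induction t rule: less_induct)
  case (less t)
  show ?case
  proof (cases t)
    case 0 then show ?thesis by simp
  next
    case (Suc t')
    have IH: "matched d s i u = matched d s' i u" if "u \<le> t'" for u
      using less that Suc by auto
    have "(s!t' = i) = (s'!t' = i)" using assms(2) less Suc by auto
    then show ?thesis unfolding Suc matched_Suc using IH assms(1) by auto
  qed
qed

lemma matched_disj:
  assumes "matched d s i t1" "matched d s i t2" "t1 < t2" "t2 < t1 + d"
  shows False
  using assms matched_Av[of d s i t2] matched_Av[of d s i t1] unfolding Av_def by auto

lemma window_sum:
  assumes "d \<ge> 1"
  shows "ind (\<not> Av d s i j) = (\<Sum>t\<in>{max 1 (j+1-d)..<j}. ind (matched d s i t))"
proof -
  have W: "t \<in> {max 1 (j+1-d)..<j} \<longleftrightarrow> 1 \<le> t \<and> t < j \<and> j < t + d" for t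
    using assms by auto
  show ?thesis
  proof (cases "Av d s i j")
    case True
    then have "\<forall>t\<in>{max 1 (j+1-d)..<j}. ind (matched d s i t) = 0"
      unfolding Av_def W ind_def by auto
    then show ?thesis using True by (simp add: ind_def)
  next
    case False
    then obtain t0 where t0: "1 \<le> t0" "t0 < j" "j < t0 + d" "matched d s i t0"
      unfolding Av_def by auto
    have "\<forall>t\<in>{max 1 (j+1-d)..<j}. ind (matched d s i t) = (if t = t0 then 1 else 0)"
    proof
      fix t assume t: "t \<in> {max 1 (j+1-d)..<j}"
      show "ind (matched d s i t) = (if t = t0 then 1 else 0)"
      proof (cases "t = t0")
        case False
        then have "t < t0 \<or> t0 < t" by arith
        then have "\<not> matched d s i t"
          using matched_disj[of d s i t t0] matched_disj[of d s i t0 t] t0 t W by auto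
        then show ?thesis using False by (simp add: ind_def)
      qed (simp add: ind_def t0)
    qed
    then have "(\<Sum>t\<in>{max 1 (j+1-d)..<j}. ind (matched d s i t)) = (\<Sum>t\<in>{max 1 (j+1-d)..<j}. if t = t0 then 1 else 0)"
      by (intro sum.cong refl) blast
    also have "\<dots> = 1" using t0 W by simp
    finally show ?thesis using False by (simp add: ind_def)
  qed
qed

lemma matched_couple:
  assumes "length s = length s2" "\<And>u. u < J \<Longrightarrow> u \<noteq> r \<Longrightarrow> s!u = s2!u" "s2!r \<noteq> i"
    "\<not> matched d s i (Suc r)" "t \<le> J"
  shows "matched d s2 i t = matched d s i t"
  using assms(5)
proof (induction t rule: less_induct)
  case (less t)
  show ?case
  proof (cases t)
    case 0 then show ?thesis by simp
  next
    case (Suc t')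
    have IH: "matched d s2 i u = matched d s i u" if "u \<le> t'" for u
      using less that Suc by auto
    show ?thesis
    proof (cases "t' = r")
      case True
      then show ?thesis using assms(3,4) Suc by (simp add: matched_Suc)
    next
      case False
      then have "s!t' = s2!t'" using assms(2) less Suc by auto
      then show ?thesis unfolding Suc matched_Suc using IH assms(1) by auto
    qed
  qed
qed


definition wfQ :: "'v set list \<Rightarrow> bool" where
  "wfQ Q \<longleftrightarrow> (\<forall>u<length Q. card (Q!u) = 1 \<or> card (Q!u) = 2)"

lemma length_sls[simp]: "length (sls d Q cs) = length Q"
  by (simp add: sls_def)

lemma sls_nth: "u < length Q \<Longrightarrow> sls d Q cs ! u = SEL d Q cs u"
  by (simp add: sls_def)

lemma TAU_upd: "u \<le> r \<Longrightarrow> TAU d Q (cs[r:=x]) u = TAU d Q cs u"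
  by (rule TAU_cong) auto

lemma SEL_upd: "u < r \<Longrightarrow> SEL d Q (cs[r:=x]) u = SEL d Q cs u"
  by (rule SEL_cong) auto

lemma matched_upd:
  assumes "r < length Q" "t \<le> r"
  shows "matched d (sls d Q (cs[r:=x])) i t = matched d (sls d Q cs) i t"
  by (rule matched_cong[of _ _ r]) (use assms in \<open>auto simp: sls_nth SEL_upd\<close>)

lemma Av_upd:
  assumes "r < length Q" "j \<le> Suc r"
  shows "Av d (sls d Q (cs[r:=x])) i j = Av d (sls d Q cs) i j"
  unfolding Av_def using matched_upd[OF assms(1), of _ d cs x i] assms(2) by auto

lemma matched_SEL:
  assumes "1 \<le> j" "j \<le> length Q"
  shows "matched d (sls d Q cs) i j \<longleftrightarrow> SEL d Q cs (j-1) = i \<and> Av d (sls d Q cs) i j"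
  using assms by (simp add: matched_Av sls_nth)

lemma SEL_in: "wfQ Q \<Longrightarrow> u < length Q \<Longrightarrow> SEL d Q cs u \<in> Q!u"
  unfolding SEL_def wfQ_def by (intro sel_of_in) auto

lemma TAU_other_range:
  assumes "wfQ Q" "b \<le> length Q" "a \<le> b" "\<And>u. a \<le> u \<Longrightarrow> u < b \<Longrightarrow> v \<notin> Q!u"
  shows "TAU d Q cs b v = TAU d Q cs a v"
  using assms(2,3,4)
proof (induction b)
  case 0 then show ?case by simp
next
  case (Suc b)
  show ?case
  proof (cases "a = Suc b")
    case False
    then have ab: "a \<le> b" using Suc by auto
    have "TAU d Q cs (Suc b) v = TAU d Q cs b v"
      using Suc ab assms(1) by (simp add: tau_of_other wfQ_def)
    then show ?thesis using Suc ab by simp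
  qed simp
qed

lemma TAU_none:
  assumes "wfQ Q" "k \<le> length Q" "\<And>r. r < k \<Longrightarrow> v \<in> Q!r \<Longrightarrow> r + 1 + d \<le> t"
  shows "TAU d Q cs k v t = Unk"
  using assms(2,3)
proof (induction k)
  case 0 then show ?case by simp
next
  case (Suc k)
  have IH: "TAU d Q cs k v t = Unk" using Suc by auto
  show ?case
  proof (cases "v \<in> Q!k")
    case True
    then have "k + 1 + d \<le> t" using Suc by auto
    then show ?thesis using IH by (simp add: tau_of_outside)
  next
    case False
    then show ?thesis using IH Suc assms(1) by (simp add: tau_of_other wfQ_def)
  qed
qed

lemma TAU_mark:
  assumes "wfQ Q" "k \<le> length Q" "r < k" "v \<in> Q!r" "\<And>u. r < u \<Longrightarrow> u < k \<Longrightarrow> v \<notin> Q!u"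
    "r + 2 \<le> t" "t < r + 1 + d"
  shows "TAU d Q cs k v t = markval (Q!r) (cs!r) v"
proof -
  have "TAU d Q cs k v = TAU d Q cs (Suc r) v"
    by (rule TAU_other_range) (use assms in auto)
  moreover have "TAU d Q cs (Suc r) v t = markval (Q!r) (cs!r) v"
    using assms by (simp add: tau_of_in wfQ_def)
  ultimately show ?thesis by simp
qed

lemma TAU_cases:
  assumes "wfQ Q" "j \<le> length Q"
  obtains "\<And>cs. TAU d Q cs (j-1) x j = Unk"
  | r where "r < j-1" "x \<in> Q!r" "j < r + 1 + d" "\<And>u. r < u \<Longrightarrow> u < j-1 \<Longrightarrow> x \<notin> Q!u"
proof -
  define R where "R = {r. r < j-1 \<and> x \<in> Q!r \<and> j < r + 1 + d}"
  have finR: "finite R" unfolding R_def by auto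
  show ?thesis
  proof (cases "R = {}")
    case True
    have "TAU d Q cs (j-1) x j = Unk" for cs
      by (rule TAU_none) (use assms True in \<open>auto simp: R_def\<close>)
    then show ?thesis using that(1) by blast
  next
    case False
    define r where "r = Max R"
    have rR: "r \<in> R" using False finR r_def by simp
    have "x \<notin> Q!u" if "r < u" "u < j-1" for u
    proof
      assume "x \<in> Q!u"
      then have "u \<in> R" using rR that unfolding R_def by auto
      then have "u \<le> r" using finR r_def by simp
      then show False using that by simp
    qed
    then show ?thesis using that(2)[of r] rR unfolding R_def by blast
  qed
qed

lemma invol_sum:
  fixes f :: "coin list \<Rightarrow> real"
  assumes "\<And>c. g (g c) = c" "r < n"
  shows "(\<Sum>cs\<in>Lc n. f cs) = (\<Sum>cs\<in>Lc n. f (cs[r := g (cs!r)]))"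
  by (rule sum.reindex_bij_witness[of _ "\<lambda>cs. cs[r := g (cs!r)]" "\<lambda>cs. cs[r := g (cs!r)]"])
     (use assms in \<open>auto simp: Lc_def\<close>)

fun xr :: "coin \<Rightarrow> coin \<Rightarrow> coin" where
  "xr (a1,a2,a3) (b1,b2,b3) = (a1 \<noteq> b1, a2 \<noteq> b2, a3 \<noteq> b3)"

lemma xr_invol: "xr a (xr a b) = b"
  by (cases a; cases b) auto

lemma xr_invol2: "xr (xr a b) b = a"
  by (cases a; cases b) auto

lemma card_coin: "card (UNIV :: coin set) = 8"
  by (simp add: card_UNIV_bool)

lemma resample:
  fixes H :: "coin list \<Rightarrow> coin \<Rightarrow> real"
  assumes "r < n" "\<And>cs x c. H (cs[r:=x]) c = H cs c"
  shows "(\<Sum>cs\<in>Lc n. H cs (cs!r)) = (\<Sum>cs\<in>Lc n. \<Sum>c\<in>UNIV. H cs c) / 8"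
proof -
  have step1: "(\<Sum>cs\<in>Lc n. H cs (cs!r)) = (\<Sum>cs\<in>Lc n. H cs (xr a (cs!r)))" for a
  proof -
    have "(\<Sum>cs\<in>Lc n. H cs (cs!r)) = (\<Sum>cs\<in>Lc n. H (cs[r := xr a (cs!r)]) ((cs[r := xr a (cs!r)])!r))"
      by (rule invol_sum[OF xr_invol assms(1)])
    also have "\<dots> = (\<Sum>cs\<in>Lc n. H cs (xr a (cs!r)))"
      by (rule sum.cong[OF refl]) (use assms in \<open>simp add: Lc_def\<close>)
    finally show ?thesis .
  qed
  have step2: "(\<Sum>a\<in>UNIV. H cs (xr a b)) = (\<Sum>c\<in>UNIV. H cs c)" for cs b
    by (rule sum.reindex_bij_witness[of _ "\<lambda>c. xr c b" "\<lambda>c. xr c b"]) (auto simp: xr_invol2)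
  have "8 * (\<Sum>cs\<in>Lc n. H cs (cs!r)) = (\<Sum>a\<in>(UNIV::coin set). \<Sum>cs\<in>Lc n. H cs (cs!r))"
    by (simp add: card_coin)
  also have "\<dots> = (\<Sum>a\<in>(UNIV::coin set). \<Sum>cs\<in>Lc n. H cs (xr a (cs!r)))"
    using step1 by simp
  also have "\<dots> = (\<Sum>cs\<in>Lc n. \<Sum>a\<in>UNIV. H cs (xr a (cs!r)))"
    by (rule sum.swap)
  also have "\<dots> = (\<Sum>cs\<in>Lc n. \<Sum>c\<in>UNIV. H cs c)"
    using step2 by simp
  finally show ?thesis by simp
qed


lemma UNIV_coin: "(UNIV :: coin set) = {(True,True,True),(True,True,False),(True,False,True),(True,False,False),
   (False,True,True),(False,True,False),(False,False,True),(False,False,False)}"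
  by auto

lemma sum_coin: "(\<Sum>c\<in>UNIV. f c) = f (True,True,True) + f (True,True,False) + f (True,False,True) + f (True,False,False)
   + f (False,True,True) + f (False,True,False) + f (False,False,True) + f (False,False,False)"
  for f :: "coin \<Rightarrow> real"
  unfolding UNIV_coin by simp

definition gv :: "'v \<Rightarrow> 'v \<Rightarrow> tstate \<Rightarrow> real" where
  "gv i x val = (case val of Unk \<Rightarrow> 0 | Sel \<Rightarrow> (if x = i then -1 else 1) | NSel \<Rightarrow> (if x = i then 1 else -1))"

lemma sel_count:
  assumes c2: "card Q = 2" and b0: "i = pick Q b0" and k: "k = pick Q (\<not> b0)"
  shows "(\<Sum>c\<in>UNIV. ind (sel_of d Q j tau c = i)) = 4 + gv i i (tau i j) + gv i k (tau k j)"
proof -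
  have ne: "pick Q True \<noteq> pick Q False" "pick Q False \<noteq> pick Q True" using pick_inj[OF c2] by auto
  show ?thesis
    unfolding sum_coin using c2 ne b0 k
    by (cases b0; cases "tau i j"; cases "tau k j") (simp_all add: sel_of_def ind_def gv_def)
qed

lemma termi_coin:
  assumes c2: "card Q = 2" and b0: "i = pick Q b0"
  shows "(\<Sum>c\<in>UNIV. ind (P \<and> \<not> (sel_of d Q j tau c = i \<and> A)) * gv i i (markval Q c i)) = ind P - ind (P \<and> \<not> A)"
proof -
  have ne: "pick Q True \<noteq> pick Q False" "pick Q False \<noteq> pick Q True" using pick_inj[OF c2] by auto
  show ?thesis
    unfolding sum_coin using c2 ne b0
    by (cases b0) (simp_all add: sel_of_def ind_def gv_def markval_def)
qed

section \<open>Sum forms of dmu and avail\<close>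

definition SM :: "nat \<Rightarrow> 'v set list \<Rightarrow> 'v \<Rightarrow> nat \<Rightarrow> real" where
  "SM d Q i j = (\<Sum>cs\<in>Lc (length Q). ind (matched d (sls d Q cs) i j))"

definition SA :: "nat \<Rightarrow> 'v set list \<Rightarrow> 'v \<Rightarrow> nat \<Rightarrow> real" where
  "SA d Q i j = (\<Sum>cs\<in>Lc (length Q). ind (Av d (sls d Q cs) i j))"

lemma dmu_SM: "dmu d Q i j = SM d Q i j / 8 ^ length Q"
  by (simp add: dmu_sum SM_def)

lemma sum_Lc_one: "(\<Sum>cs\<in>Lc n. (1::real)) = 8 ^ n"
  by (simp add: card_Lc)

lemma avail_SA:
  assumes "d \<ge> 1"
  shows "avail d Q i j = SA d Q i j / 8 ^ length Q"
proof -
  let ?n = "length Q" and ?W = "{max 1 (j+1-d)..<j}"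
  have "SA d Q i j = (\<Sum>cs\<in>Lc ?n. 1 - ind (\<not> Av d (sls d Q cs) i j))"
    unfolding SA_def by (rule sum.cong) (auto simp: ind_def)
  also have "\<dots> = (\<Sum>cs\<in>Lc ?n. 1 - (\<Sum>t\<in>?W. ind (matched d (sls d Q cs) i t)))"
    by (rule sum.cong[OF refl]) (subst window_sum[OF assms], rule refl)
  also have "\<dots> = 8 ^ ?n - (\<Sum>t\<in>?W. SM d Q i t)"
    unfolding SM_def sum_subtractf sum_Lc_one by (subst sum.swap) (rule refl)
  finally have e: "SA d Q i j = 8 ^ ?n - (\<Sum>t\<in>?W. SM d Q i t)" .
  have "avail d Q i j = 1 - (\<Sum>t\<in>?W. SM d Q i t) / 8 ^ ?n"
    by (simp add: avail_def dmu_SM sum_divide_distrib)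
  then show ?thesis using e by (simp add: field_simps)
qed

lemma prev_facts:
  assumes "prev Q i j = Some j'"
  shows "1 \<le> j'" "j' < j" "i \<in> Q!(j'-1)" "\<And>u. j' < u \<Longrightarrow> u < j \<Longrightarrow> i \<notin> Q!(u-1)"
proof -
  let ?P = "\<lambda>j'. 1 \<le> j' \<and> j' < j \<and> i \<in> Q ! (j' - 1)"
  have ex: "\<exists>j'. ?P j'" and jg: "j' = Greatest ?P"
    using assms unfolding prev_def by (auto split: if_splits)
  then obtain k where k: "?P k" by blast
  have bnd: "\<And>y. ?P y \<Longrightarrow> y \<le> j" by auto
  have "?P j'" using GreatestI_nat[of ?P k j, OF k bnd] jg by simp
  then show "1 \<le> j'" "j' < j" "i \<in> Q!(j'-1)" by auto
  show "i \<notin> Q!(u-1)" if "j' < u" "u < j" for u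
  proof
    assume "i \<in> Q!(u-1)"
    then have "?P u" using that \<open>?P j'\<close> by auto
    then have "u \<le> j'" using Greatest_le_nat[of ?P u j, OF _ bnd] jg by simp
    then show False using that by simp
  qed
qed


section \<open>Coupling\<close>

lemma tau_of_sender_other:
  "card Q = 2 \<Longrightarrow> v \<noteq> pick Q b3 \<Longrightarrow> tau_of d Q j tau (True,b2,b3) v = tau_of d Q j tau (True,b2',b3) v"
  by (simp add: tau_of_def set_tau_def reset_def)

lemma AvMono:
  assumes wf: "wfQ Q" and n: "j \<le> length Q" and len: "length cs = length Q"
    and r: "r < j - 1" and win: "j < r + 1 + d"
    and c2: "card (Q!r) = 2" and cr: "cs!r = (True, b2, b3)" and x: "x = pick (Q!r) b3"
    and nx: "\<And>u. r < u \<Longrightarrow> u < j-1 \<Longrightarrow> x \<notin> Q!u"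
    and sel: "SEL d Q (cs[r := (True,b2',b3)]) r \<noteq> i"
    and av: "Av d (sls d Q cs) i j"
  shows "Av d (sls d Q (cs[r := (True,b2',b3)])) i j"
proof -
  define cs2 where "cs2 = cs[r := (True,b2',b3)]"
  have rl: "r < length cs" using r n len by simp
  have c2r: "cs2!r = (True,b2',b3)" using rl by (simp add: cs2_def)
  have cu: "cs2!u = cs!u" if "u \<noteq> r" for u using that by (simp add: cs2_def)
  have T: "\<forall>v. v \<noteq> x \<longrightarrow> TAU d Q cs2 (Suc r + m) v = TAU d Q cs (Suc r + m) v"
    if "Suc r + m \<le> j - 1" for m
    using that
  proof (induction m)
    case 0
    have "TAU d Q cs2 r = TAU d Q cs r" unfolding cs2_def by (rule TAU_upd) simp
    then show ?case using c2r cr c2 x by (simp add: tau_of_sender_other)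
  next
    case (Suc m)
    have IH: "\<forall>v. v \<noteq> x \<longrightarrow> TAU d Q cs2 (Suc r + m) v = TAU d Q cs (Suc r + m) v"
      using Suc by simp
    have "cs2 ! (Suc r + m) = cs ! (Suc r + m)" by (rule cu) simp
    then show ?case using IH by (auto intro: tau_of_local)
  qed
  have S: "SEL d Q cs2 u = SEL d Q cs u" if "u < j-1" "u \<noteq> r" for u
  proof (cases "u < r")
    case True
    then show ?thesis unfolding cs2_def by (rule SEL_upd)
  next
    case False
    then have ru: "r < u" using that by simp
    then obtain m where m: "u = Suc r + m" using less_imp_Suc_add by blast
    have TT: "TAU d Q cs2 u v = TAU d Q cs u v" if "v \<in> Q!u" for v
      using T[of m] m \<open>u < j-1\<close> nx[OF ru \<open>u < j-1\<close>] that by auto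
    have cd: "card (Q!u) = 1 \<or> card (Q!u) = 2" using wf n \<open>u < j-1\<close> by (auto simp: wfQ_def)
    show ?thesis unfolding SEL_def using cu[OF that(2)] sel_of_local[OF TT cd] by simp
  qed
  have nm: "\<not> matched d (sls d Q cs) i (Suc r)" using av r win unfolding Av_def by auto
  have M: "matched d (sls d Q cs2) i t = matched d (sls d Q cs) i t" if "t \<le> j-1" for t
  proof (rule matched_couple[of _ _ "j-1" r])
    show "length (sls d Q cs) = length (sls d Q cs2)" by simp
    show "sls d Q cs ! u = sls d Q cs2 ! u" if "u < j-1" "u \<noteq> r" for u
      using that n S by (simp add: sls_nth)
    show "sls d Q cs2 ! r \<noteq> i" using sel r n by (simp add: sls_nth cs2_def)
  qed (use nm that in auto)
  show ?thesis using av M unfolding Av_def cs2_def[symmetric] by auto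
qed

definition fl :: "coin \<Rightarrow> coin" where "fl c = (case c of (b1,b2,b3) \<Rightarrow> (b1, \<not> b2, b3))"

lemma fl_invol: "fl (fl c) = c" by (cases c) (simp add: fl_def)

lemma term_nonneg:
  assumes wf: "wfQ Q" and j: "1 \<le> j" "j \<le> length Q"
  shows "0 \<le> (\<Sum>cs\<in>Lc (length Q). ind (Av d (sls d Q cs) i j) * gv i x (TAU d Q cs (j-1) x j))"
proof (cases rule: TAU_cases[OF wf j(2), of d x])
  case 1
  then show ?thesis by (simp add: gv_def)
next
  case (2 r)
  let ?n = "length Q"
  define F where "F cs = ind (Av d (sls d Q cs) i j) * gv i x (markval (Q!r) (cs!r) x)" for cs
  have "(\<Sum>cs\<in>Lc ?n. ind (Av d (sls d Q cs) i j) * gv i x (TAU d Q cs (j-1) x j)) = (\<Sum>cs\<in>Lc ?n. F cs)"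
  proof (rule sum.cong[OF refl])
    fix cs
    have "TAU d Q cs (j-1) x j = markval (Q!r) (cs!r) x"
      by (rule TAU_mark) (use wf j 2 in auto)
    then show "ind (Av d (sls d Q cs) i j) * gv i x (TAU d Q cs (j-1) x j) = F cs" by (simp add: F_def)
  qed
  moreover have "(\<Sum>cs\<in>Lc ?n. F cs) = (\<Sum>cs\<in>Lc ?n. F (cs[r := fl (cs!r)]))"
    by (rule invol_sum[OF fl_invol]) (use 2 j in auto)
  moreover have "0 \<le> (\<Sum>cs\<in>Lc ?n. F cs + F (cs[r := fl (cs!r)]))"
  proof (rule sum_nonneg)
    fix cs assume "cs \<in> Lc ?n"
    then have len: "length cs = ?n" by (simp add: Lc_def)
    have rl: "r < length cs" using len 2 j by simp
    obtain b1 b2 b3 where cr: "cs!r = (b1,b2,b3)" by (cases "cs!r")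
    define cs' where "cs' = cs[r := (b1, \<not> b2, b3)]"
    have cs'r: "cs'!r = (b1, \<not>b2, b3)" using rl by (simp add: cs'_def)
    have flc: "cs[r := fl (cs!r)] = cs'" by (simp add: cs'_def cr fl_def)
    show "0 \<le> F cs + F (cs[r := fl (cs!r)])"
    proof (cases "card (Q!r) = 2 \<and> b1 \<and> pick (Q!r) b3 = x")
      case False
      then have "markval (Q!r) (cs!r) x = Unk" "markval (Q!r) (cs'!r) x = Unk"
        using cr cs'r by (auto simp: markval_def)
      then show ?thesis unfolding flc F_def by (simp add: gv_def)
    next
      case True
      then have c2: "card (Q!r) = 2" and b1: "b1" and x: "x = pick (Q!r) b3" by auto
      have selc: "SEL d Q cs r = pick (Q!r) b2" using c2 b1 cr by (simp add: SEL_def sel_of_def)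
      have selc': "SEL d Q cs' r = pick (Q!r) (\<not> b2)" using c2 b1 cs'r by (simp add: SEL_def sel_of_def)
      have nx: "\<And>u. r < u \<Longrightarrow> u < j-1 \<Longrightarrow> x \<notin> Q!u" using 2 by auto
      have cs'T: "cs' = cs[r := (True, \<not> b2, b3)]" using b1 by (simp add: cs'_def)
      have imp2: "Av d (sls d Q cs) i j \<Longrightarrow> Av d (sls d Q cs') i j" if "pick (Q!r) (\<not> b2) \<noteq> i"
        unfolding cs'T
        by (rule AvMono[OF wf j(2) len _ _ c2 _ x nx]) (use 2 b1 cr selc' that cs'T in auto)
      have cs'': "cs'[r := (True, b2, b3)] = cs" using cr b1 by (simp add: cs'_def) (metis list_update_id)
      have imp1: "Av d (sls d Q cs') i j \<Longrightarrow> Av d (sls d Q cs) i j" if "pick (Q!r) b2 \<noteq> i"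
      proof -
        assume a: "Av d (sls d Q cs') i j"
        have "Av d (sls d Q (cs'[r := (True, b2, b3)])) i j"
          by (rule AvMono[OF wf j(2) _ _ _ c2 _ x nx]) (use 2 b1 cs'r selc that a len cs'' in \<open>auto simp: cs'_def\<close>)
        then show ?thesis using cs'' by simp
      qed
      have pi: "pick (Q!r) a = pick (Q!r) b \<longleftrightarrow> a = b" for a b using pick_inj[OF c2] .
      show ?thesis unfolding flc F_def using cr cs'r b1 c2 x imp1 imp2 pi
        by (cases b2; cases b3; cases "x = i") (auto simp: markval_def gv_def ind_def)
    qed
  qed
  ultimately show ?thesis by (simp add: sum.distrib)
qed


section \<open>Round decomposition\<close>

definition TT :: "nat \<Rightarrow> 'v set list \<Rightarrow> 'v \<Rightarrow> 'v \<Rightarrow> nat \<Rightarrow> real" where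
  "TT d Q i x j = (\<Sum>cs\<in>Lc (length Q). ind (Av d (sls d Q cs) i j) * gv i x (TAU d Q cs (j-1) x j))"

lemma SM_Av_SEL:
  assumes "1 \<le> j" "j \<le> length Q"
  shows "SM d Q i j = (\<Sum>cs\<in>Lc (length Q). ind (Av d (sls d Q cs) i j) * ind (SEL d Q cs (j-1) = i))"
  unfolding SM_def by (rule sum.cong[OF refl]) (use matched_SEL[OF assms] in \<open>simp add: ind_def\<close>)

lemma round_det:
  assumes "1 \<le> j" "j \<le> length Q" "card (Q!(j-1)) = 1" "i \<in> Q!(j-1)"
  shows "SM d Q i j = SA d Q i j"
proof -
  obtain a where a: "Q!(j-1) = {a}" using assms(3) by (rule card_1_singletonE)
  have "fst_el (Q!(j-1)) = a" using fst_el_in[of "Q!(j-1)"] a by simp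
  moreover have "i = a" using assms(4) a by simp
  ultimately have "SEL d Q cs (j-1) = i" for cs
    using assms(3) by (cases "cs!(j-1)") (auto simp: SEL_def sel_of_def)
  then show ?thesis unfolding SM_Av_SEL[OF assms(1,2)] SA_def by (simp add: ind_def)
qed

lemma round_rand:
  assumes wf: "wfQ Q" and j: "1 \<le> j" "j \<le> length Q" and c2: "card (Q!(j-1)) = 2"
    and i: "i \<in> Q!(j-1)" and k: "k \<in> Q!(j-1)" "k \<noteq> i"
  shows "SM d Q i j = SA d Q i j / 2 + (TT d Q i i j + TT d Q i k j) / 8"
proof -
  let ?n = "length Q"
  obtain b0 where b0: "i = pick (Q!(j-1)) b0" using pick_cases[OF c2 i] by blast
  obtain b' where b': "k = pick (Q!(j-1)) b'" using pick_cases[OF c2 k(1)] by blast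
  have kb: "k = pick (Q!(j-1)) (\<not> b0)" using b0 b' k(2) by (cases b0; cases b') auto
  define H where "H cs c = ind (Av d (sls d Q cs) i j) * ind (sel_of d (Q!(j-1)) j (TAU d Q cs (j-1)) c = i)" for cs c
  have "SM d Q i j = (\<Sum>cs\<in>Lc ?n. H cs (cs!(j-1)))"
    unfolding SM_Av_SEL[OF j] H_def SEL_def using j by simp
  also have "\<dots> = (\<Sum>cs\<in>Lc ?n. \<Sum>c\<in>UNIV. H cs c) / 8"
  proof (rule resample)
    show "j - 1 < ?n" using j by simp
    fix cs x c
    show "H (cs[j-1:=x]) c = H cs c"
      unfolding H_def using Av_upd[of "j-1" Q j d cs x i] TAU_upd[of "j-1" "j-1" d Q cs x] j by simp
  qed
  also have "\<dots> = (\<Sum>cs\<in>Lc ?n. 4 * ind (Av d (sls d Q cs) i j)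
       + ind (Av d (sls d Q cs) i j) * gv i i (TAU d Q cs (j-1) i j)
       + ind (Av d (sls d Q cs) i j) * gv i k (TAU d Q cs (j-1) k j)) / 8"
  proof -
    have "(\<Sum>c\<in>UNIV. H cs c) = 4 * ind (Av d (sls d Q cs) i j)
       + ind (Av d (sls d Q cs) i j) * gv i i (TAU d Q cs (j-1) i j)
       + ind (Av d (sls d Q cs) i j) * gv i k (TAU d Q cs (j-1) k j)" for cs
      unfolding H_def sum_distrib_left[symmetric] sel_count[OF c2 b0 kb] by (simp add: algebra_simps)
    then show ?thesis by simp
  qed
  also have "\<dots> = SA d Q i j / 2 + (TT d Q i i j + TT d Q i k j) / 8"
    unfolding sum.distrib SA_def TT_def sum_distrib_left[symmetric] by simp
  finally show ?thesis .
qed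

lemma termi_exact:
  assumes wf: "wfQ Q" and j: "1 \<le> j" "j \<le> length Q" and r: "r < j - 1" and i: "i \<in> Q!r"
    and c2: "card (Q!r) = 2" and win: "j < r + 1 + d" and ni: "\<And>u. r < u \<Longrightarrow> u < j-1 \<Longrightarrow> i \<notin> Q!u"
  shows "TT d Q i i j = SA d Q i (Suc r) / 8"
proof -
  let ?n = "length Q"
  define Bw where "Bw cs = (\<forall>t. 1 \<le> t \<and> t < Suc r \<and> j < t + d \<longrightarrow> \<not> matched d (sls d Q cs) i t)" for cs
  have decomp: "Av d (sls d Q cs) i j \<longleftrightarrow> Bw cs \<and> \<not> (SEL d Q cs r = i \<and> Av d (sls d Q cs) i (Suc r))" for cs
  proof -
    have mr: "matched d (sls d Q cs) i (Suc r) \<longleftrightarrow> SEL d Q cs r = i \<and> Av d (sls d Q cs) i (Suc r)"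
      using matched_SEL[of "Suc r" Q d cs i] r j by simp
    have late: "\<not> matched d (sls d Q cs) i t" if "Suc r < t" "t < j" for t
    proof
      assume "matched d (sls d Q cs) i t"
      then have "SEL d Q cs (t-1) = i" using matched_SEL[of t Q d cs i] that j by simp
      moreover have "SEL d Q cs (t-1) \<in> Q!(t-1)" using SEL_in[OF wf] that j by simp
      moreover have "i \<notin> Q!(t-1)" using ni that by simp
      ultimately show False by simp
    qed
    show ?thesis
    proof
      assume av: "Av d (sls d Q cs) i j"
      have "Bw cs" unfolding Bw_def
      proof (intro allI impI)
        fix t assume "1 \<le> t \<and> t < Suc r \<and> j < t + d"
        moreover have "Suc r < j" using r by simp
        ultimately show "\<not> matched d (sls d Q cs) i t" using av unfolding Av_def by auto
      qed
      moreover have "\<not> matched d (sls d Q cs) i (Suc r)"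
        using av r win unfolding Av_def by auto
      ultimately show "Bw cs \<and> \<not> (SEL d Q cs r = i \<and> Av d (sls d Q cs) i (Suc r))"
        using mr by simp
    next
      assume a: "Bw cs \<and> \<not> (SEL d Q cs r = i \<and> Av d (sls d Q cs) i (Suc r))"
      show "Av d (sls d Q cs) i j"
        unfolding Av_def
      proof (intro allI impI)
        fix t assume t: "1 \<le> t \<and> t < j \<and> j < t + d"
        consider "t < Suc r" | "t = Suc r" | "Suc r < t" by arith
        then show "\<not> matched d (sls d Q cs) i t"
        proof cases
          case 1 then show ?thesis using a t unfolding Bw_def by auto
        next
          case 2 then show ?thesis using a mr by auto
        next
          case 3 then show ?thesis using late t by auto
        qed
      qed
    qed
  qed
  have tau: "TAU d Q cs (j-1) i j = markval (Q!r) (cs!r) i" for cs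
    by (rule TAU_mark) (use wf j r i ni win in auto)
  define H where "H cs c = ind (Bw cs \<and> \<not> (sel_of d (Q!r) (Suc r) (TAU d Q cs r) c = i \<and> Av d (sls d Q cs) i (Suc r)))
      * gv i i (markval (Q!r) c i)" for cs c
  have "TT d Q i i j = (\<Sum>cs\<in>Lc ?n. H cs (cs!r))"
    unfolding TT_def H_def decomp tau SEL_def by simp
  also have "\<dots> = (\<Sum>cs\<in>Lc ?n. \<Sum>c\<in>UNIV. H cs c) / 8"
  proof (rule resample)
    show "r < ?n" using r j by simp
    fix cs x c
    have "Bw (cs[r:=x]) = Bw cs"
      unfolding Bw_def using matched_upd[of r Q _ d cs x i] r j by auto
    then show "H (cs[r:=x]) c = H cs c"
      unfolding H_def using Av_upd[of r Q "Suc r" d cs x i] TAU_upd[of r r d Q cs x] r j by simp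
  qed
  also have "\<dots> = SA d Q i (Suc r) / 8"
  proof -
    obtain b0 where b0: "i = pick (Q!r) b0" using pick_cases[OF c2 i] by blast
    have "(\<Sum>c\<in>UNIV. H cs c) = ind (Av d (sls d Q cs) i (Suc r))" for cs
    proof -
      have AB: "Av d (sls d Q cs) i (Suc r) \<Longrightarrow> Bw cs" unfolding Av_def Bw_def using r by auto
      show ?thesis unfolding H_def termi_coin[OF c2 b0] using AB by (auto simp: ind_def)
    qed
    then show ?thesis unfolding SA_def by simp
  qed
  finally show ?thesis .
qed


lemma SA_nonneg: "0 \<le> SA d Q i j" unfolding SA_def by (rule sum_nonneg) (simp add: ind_def)
lemma SM_nonneg: "0 \<le> SM d Q i j" unfolding SM_def by (rule sum_nonneg) (simp add: ind_def)

lemma other_el: "card Q = 2 \<Longrightarrow> i \<in> Q \<Longrightarrow> \<exists>k. k \<in> Q \<and> k \<noteq> i"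
  using card2_facts(1,2,3) by metis

lemma half:
  assumes wf: "wfQ Q" and j: "1 \<le> j" "j \<le> length Q" and i: "i \<in> Q!(j-1)"
  shows "SA d Q i j / 2 \<le> SM d Q i j"
proof -
  have "card (Q!(j-1)) = 1 \<or> card (Q!(j-1)) = 2" using wf j by (simp add: wfQ_def)
  then show ?thesis
  proof
    assume "card (Q!(j-1)) = 1"
    then show ?thesis using round_det[OF j _ i] SA_nonneg[of d Q i j] by simp
  next
    assume c2: "card (Q!(j-1)) = 2"
    obtain k where k: "k \<in> Q!(j-1)" "k \<noteq> i" using other_el[OF c2 i] by blast
    have "0 \<le> TT d Q i i j" "0 \<le> TT d Q i k j" unfolding TT_def using term_nonneg[OF wf j] by auto
    then show ?thesis using round_rand[OF wf j c2 i k] by simp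
  qed
qed

theorem mainTheorem2:
  fixes V :: "'v set" and Q :: "'v set list" and d :: nat
  assumes "finite V" and "d \<ge> 1"
    and "\<forall>q\<in>set Q. q \<subseteq> V \<and> (card q = 1 \<or> card q = 2)"
  shows "\<forall>j i. 1 \<le> j \<and> j \<le> length Q \<and> i \<in> V \<longrightarrow>
     (i \<notin> Q ! (j - 1) \<longrightarrow> dmu d Q i j \<ge> 0) \<and>
     (i \<in> Q ! (j - 1) \<and> card (Q ! (j - 1)) = 1 \<longrightarrow> dmu d Q i j \<ge> avail d Q i j) \<and>
     (i \<in> Q ! (j - 1) \<and> card (Q ! (j - 1)) = 2 \<and>
        (prev Q i j = None \<or> (\<exists>j'. prev Q i j = Some j' \<and> j' + d \<le> j))
        \<longrightarrow> dmu d Q i j \<ge> avail d Q i j / 2) \<and>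
     (\<forall>j'. i \<in> Q ! (j - 1) \<and> card (Q ! (j - 1)) = 2 \<and> prev Q i j = Some j' \<and> j < j' + d
        \<longrightarrow> dmu d Q i j \<ge> avail d Q i j / 2 + (1/32) * (avail d Q i j' - dmu d Q i j'))"
proof (intro allI impI)
  fix j i
  assume H: "1 \<le> j \<and> j \<le> length Q \<and> i \<in> V"
  then have j: "1 \<le> j" "j \<le> length Q" by auto
  have wf: "wfQ Q" using assms(3) by (auto simp: wfQ_def)
  define N :: real where "N = 8 ^ length Q"
  have N: "N > 0" by (simp add: N_def)
  have dmuN: "dmu d Q i t = SM d Q i t / N" for t by (simp add: dmu_SM N_def)
  have avN: "avail d Q i t = SA d Q i t / N" for t by (simp add: avail_SA[OF assms(2)] N_def)
  have halfN: "avail d Q i j / 2 \<le> dmu d Q i j" if "i \<in> Q!(j-1)"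
  proof -
    have "SA d Q i j / 2 / N \<le> SM d Q i j / N"
      by (rule divide_right_mono[OF half[OF wf j that]]) (use N in simp)
    then show ?thesis by (simp add: dmuN avN)
  qed
  show "(i \<notin> Q ! (j - 1) \<longrightarrow> dmu d Q i j \<ge> 0) \<and>
     (i \<in> Q ! (j - 1) \<and> card (Q ! (j - 1)) = 1 \<longrightarrow> dmu d Q i j \<ge> avail d Q i j) \<and>
     (i \<in> Q ! (j - 1) \<and> card (Q ! (j - 1)) = 2 \<and>
        (prev Q i j = None \<or> (\<exists>j'. prev Q i j = Some j' \<and> j' + d \<le> j))
        \<longrightarrow> dmu d Q i j \<ge> avail d Q i j / 2) \<and>
     (\<forall>j'. i \<in> Q ! (j - 1) \<and> card (Q ! (j - 1)) = 2 \<and> prev Q i j = Some j' \<and> j < j' + d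
        \<longrightarrow> dmu d Q i j \<ge> avail d Q i j / 2 + (1/32) * (avail d Q i j' - dmu d Q i j'))"
  proof (intro conjI impI allI)
    show "dmu d Q i j \<ge> 0" using SM_nonneg[of d Q i j] N by (simp add: dmuN)
  next
    assume "i \<in> Q ! (j - 1) \<and> card (Q ! (j - 1)) = 1"
    then show "dmu d Q i j \<ge> avail d Q i j" using round_det[OF j] by (simp add: dmuN avN)
  next
    assume "i \<in> Q ! (j - 1) \<and> card (Q ! (j - 1)) = 2 \<and>
        (prev Q i j = None \<or> (\<exists>j'. prev Q i j = Some j' \<and> j' + d \<le> j))"
    then show "dmu d Q i j \<ge> avail d Q i j / 2" using halfN by simp
  next
    fix j'
    assume a: "i \<in> Q ! (j - 1) \<and> card (Q ! (j - 1)) = 2 \<and> prev Q i j = Some j' \<and> j < j' + d"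
    then have i: "i \<in> Q!(j-1)" and c2: "card (Q!(j-1)) = 2" and pv: "prev Q i j = Some j'"
      and win0: "j < j' + d" by auto
    note pf = prev_facts[OF pv]
    define r where "r = j' - 1"
    have jr: "j' = Suc r" using pf(1) by (simp add: r_def)
    have r: "r < j - 1" using pf(2) jr by simp
    have ir: "i \<in> Q!r" using pf(3) by (simp add: r_def)
    have win: "j < r + 1 + d" using win0 jr by simp
    have ni: "\<And>u. r < u \<Longrightarrow> u < j-1 \<Longrightarrow> i \<notin> Q!u"
      using pf(4)[of "Suc _"] jr by simp
    have j'b: "1 \<le> j'" "j' \<le> length Q" using jr r j by auto
    have ij': "i \<in> Q!(j'-1)" using ir jr by simp
    have cr: "card (Q!r) = 1 \<or> card (Q!r) = 2" using wf r j by (simp add: wfQ_def)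
    show "dmu d Q i j \<ge> avail d Q i j / 2 + (1/32) * (avail d Q i j' - dmu d Q i j')"
      using cr
    proof
      assume "card (Q!r) = 1"
      then have "SM d Q i j' = SA d Q i j'" using round_det[OF j'b] ij' jr by simp
      then have "avail d Q i j' - dmu d Q i j' = 0" by (simp add: dmuN avN)
      then show ?thesis using halfN[OF i] by simp
    next
      assume c2r: "card (Q!r) = 2"
      obtain k where k: "k \<in> Q!(j-1)" "k \<noteq> i" using other_el[OF c2 i] by blast
      have Tk: "0 \<le> TT d Q i k j" unfolding TT_def using term_nonneg[OF wf j] by auto
      have Ti: "TT d Q i i j = SA d Q i j' / 8"
        using termi_exact[OF wf j r ir c2r win ni] jr by simp
      have h': "SA d Q i j' / 2 \<le> SM d Q i j'" using half[OF wf j'b ij'] .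
      have key: "SA d Q i j / 2 + (SA d Q i j' - SM d Q i j') / 32 \<le> SM d Q i j"
        using round_rand[OF wf j c2 i k] Ti Tk h' by simp
      have "(SA d Q i j / 2 + (SA d Q i j' - SM d Q i j') / 32) / N \<le> SM d Q i j / N"
        by (rule divide_right_mono[OF key]) (use N in simp)
      moreover have "(SA d Q i j / 2 + (SA d Q i j' - SM d Q i j') / 32) / N =
          avail d Q i j / 2 + (1/32) * (avail d Q i j' - dmu d Q i j')"
        using N by (simp add: dmuN avN field_simps)
      ultimately show ?thesis by (simp add: dmuN)
    qed
  qed
qed

end
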